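(* Let $X$ be a metric space. For $g\in\mathfrak{S}^\infty(\mathfrak{C}X)$ define $\mathsf{dist}\,g := \lambda\varepsilon.\ \mathsf{map}\,(\lambda x.\,x\,\varepsilon)\,g$. Then $\mathsf{dist}\,g\in\mathfrak{C}(\mathfrak{S}^\infty X)$, and $\mathsf{dist}:\mathfrak{S}^\infty(\mathfrak{C}X)\to\mathfrak{C}(\mathfrak{S}^\infty X)$ is uniformly continuous. Consequently, for every uniformly continuous $f:\mathbb{Q}\to\mathbb{R}$ (where $\mathbb{R}:=\mathfrak{C}\mathbb{Q}$), the composite $\mathsf{dist}\circ(\mathsf{map}\ f):\mathfrak{S}^\infty\mathbb{Q}\to\mathfrak{C}(\mathfrak{S}^\infty\mathbb{Q})$ is uniformly continuous.
   Context: Step functions. For a type $X$, $\mathfrak{S}X$ is the inductive type of (formal, rational) step functions on $[0,1]$: constructors $\mathsf{const}\ x$ ($x\in X$, written $\hat x$) and $\mathsf{glue}\ o\ f\ g$ ($o\in(0,1)\cap\mathbb{Q}$, $f,g\in\mathfrak{S}X$). Split. For $a\in(0,1)\cap\mathbb{Q}$: $\mathsf{SplitL}\ \hat x\ a := \hat x$, $\mathsf{SplitR}\ \hat x\ a:=\hat x$, and $\mathsf{SplitL}(\mathsf{glue}\ o\ f_l\ f_r)\ a :=$ $\mathsf{SplitL}\ f_l\ (a/o)$ if $a<o$; $f_l$ if $a=o$; $\mathsf{glue}\ (o/a)\ f_l\ (\mathsf{SplitL}\ f_r\ \tfrac{a-o}{1-o})$ if $a>o$. $\mathsf{SplitR}(\mathsf{glue}\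 o\ f_l\ f_r)\ a :=$ $\mathsf{glue}\ \tfrac{o-a}{1-a}\ (\mathsf{SplitR}\ f_l\ (a/o))\ f_r$ if $a<o$; $f_r$ if $a=o$; $\mathsf{SplitR}\ f_r\ \tfrac{a-o}{1-o}$ if $a>o$. Map and ap. $\mathsf{map}\ \varphi\ \hat x := \widehat{\varphi x}$, $\mathsf{map}\ \varphi\ (\mathsf{glue}\ o\ f\ g):=\mathsf{glue}\ o\ (\mathsf{map}\ \varphi\ f)(\mathsf{map}\ \varphi\ g)$; $\varphi\circ x:=\mathsf{map}\ \varphi\ x$. $\hat\varphi @ x := \mathsf{map}\ \varphi\ x$, $(\mathsf{glue}\ o\ F_l\ F_r) @ x := \mathsf{glue}\ o\ (F_l @ \mathsf{SplitL}\ x\ o)\ (F_r @ \mathsf{SplitR}\ x\ o)$. Fold. $\mathsf{fold}\ \varphi\ \psi\ \hat x:=\varphi x$, $\mathsf{fold}\ \varphi\ \psi\ (\mathsf{glue}\ o\ f\ g) := \psi\ o\ (\mathsf{fold}\ \varphi\ \psi\ f)(\mathsf{fold}\ \varphi\ \psi\ g)$; $\mathsf{fold}_\star := \mathsf{fold}\ \mathrm{id}\ (\lambda o\,p\,q.\ p\wedge q)$. Metric spaces: setoids with a respectful ball relation $\mathbf{B}_\varepsilon x\,y$ ($\varepsilon\in\mathbb{Q}^+$) satisfying reflexivity, symmetry, triangle inequality $\mathbf{B}_{\varepsilon_1}xy\wedge\mathbf{B}_{\varepsilon_2}yz\Rightarrow\mathbf{B}_{\varepsilon_1+\varepsilon_2}xz$,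 closedness ($(\forall\delta>\varepsilon.\mathbf{B}_\delta xy)\Rightarrow\mathbf{B}_\varepsilon xy$) and separation ($(\forall\varepsilon.\mathbf{B}_\varepsilon xy)\Rightarrow x\asymp y$). $\mathbb{Q}$ has $\mathbf{B}_\varepsilon x\,y:=|x-y|\le\varepsilon$. For a metric space $X$, $\mathfrak{S}^\infty X$ is $\mathfrak{S}X$ with ball $\mathbf{B}_\varepsilon f\,g := \mathsf{fold}_\star(\mathbf{B}^X_\varepsilon\circ f @ g)$. Completion. $\mathfrak{C}X$ is the set of functions $x:\mathbb{Q}^+\to X$ with $\mathbf{B}^X_{\varepsilon_1+\varepsilon_2}(x\varepsilon_1)(x\varepsilon_2)$ for all $\varepsilon_1,\varepsilon_2$, with ball $\mathbf{B}_\varepsilon x\,y := \forall\delta_1\delta_2\in\mathbb{Q}^+.\ \mathbf{B}^X_{\delta_1+\varepsilon+\delta_2}(x\delta_1)(y\delta_2)$ (and $x\asymp y$ iff $\mathbf{B}_\varepsilon xy$ for all $\varepsilon$). $\mathbb{R}:=\mathfrak{C}\mathbb{Q}$. Uniform continuity: $F:X\to Y$ is uniformly continuous if there is $\mu:\mathbb{Q}^+\to\mathbb{Q}^+$ with $\mathbf{B}^X_{\mu\varepsilon}x_1x_2\Rightarrow\mathbf{B}^Y_\varepsilon(Fx_1)(Fx_2)$. *)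

theory Defs
  imports Main "HOL.Rat"
begin

section \<open>Formal rational step functions on [0,1]\<close>

datatype 'a stepf = Const 'a | Glue rat "'a stepf" "'a stepf"

fun smap :: "('a \<Rightarrow> 'b) \<Rightarrow> 'a stepf \<Rightarrow> 'b stepf" where
  "smap \<phi> (Const x) = Const (\<phi> x)"
| "smap \<phi> (Glue r f g) = Glue r (smap \<phi> f) (smap \<phi> g)"

fun SplitL :: "'a stepf \<Rightarrow> rat \<Rightarrow> 'a stepf" where
  "SplitL (Const x) a = Const x"
| "SplitL (Glue r fl fr) a =
     (if a < r then SplitL fl (a / r)
      else if a = r then fl
      else Glue (r / a) fl (SplitL fr ((a - r) / (1 - r))))"

fun SplitR :: "'a stepf \<Rightarrow> rat \<Rightarrow> 'a stepf" where
  "SplitR (Const x) a = Const x"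
| "SplitR (Glue r fl fr) a =
     (if a < r then Glue ((r - a) / (1 - a)) (SplitR fl (a / r)) fr
      else if a = r then fr
      else SplitR fr ((a - r) / (1 - r)))"

fun sap :: "('a \<Rightarrow> 'b) stepf \<Rightarrow> 'a stepf \<Rightarrow> 'b stepf" (infixl "@@" 70) where
  "sap (Const \<phi>) x = smap \<phi> x"
| "sap (Glue r Fl Fr) x = Glue r (sap Fl (SplitL x r)) (sap Fr (SplitR x r))"

fun sfold :: "('a \<Rightarrow> 'b) \<Rightarrow> (rat \<Rightarrow> 'b \<Rightarrow> 'b \<Rightarrow> 'b) \<Rightarrow> 'a stepf \<Rightarrow> 'b" where
  "sfold \<phi> \<psi> (Const x) = \<phi> x"
| "sfold \<phi> \<psi> (Glue r f g) = \<psi> r (sfold \<phi> \<psi> f) (sfold \<phi> \<psi> g)"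

definition fold_star :: "bool stepf \<Rightarrow> bool" where
  "fold_star = sfold id (\<lambda>r p q. p \<and> q)"

fun wf_stepf :: "'a set \<Rightarrow> 'a stepf \<Rightarrow> bool" where
  "wf_stepf S (Const x) = (x \<in> S)"
| "wf_stepf S (Glue r f g) = (0 < r \<and> r < 1 \<and> wf_stepf S f \<and> wf_stepf S g)"

definition is_metric :: "'a set \<Rightarrow> ('a \<Rightarrow> 'a \<Rightarrow> bool) \<Rightarrow> (rat \<Rightarrow> 'a \<Rightarrow> 'a \<Rightarrow> bool) \<Rightarrow> bool" where
  "is_metric S E B \<longleftrightarrow>
     \<comment> \<open>setoid\<close>
     (\<forall>x\<in>S. E x x) \<and> (\<forall>x\<in>S. \<forall>y\<in>S. E x y \<longrightarrow> E y x) \<and>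
     (\<forall>x\<in>S. \<forall>y\<in>S. \<forall>z\<in>S. E x y \<longrightarrow> E y z \<longrightarrow> E x z) \<and>
     \<comment> \<open>respectful\<close>
     (\<forall>e>0. \<forall>x\<in>S. \<forall>x'\<in>S. \<forall>y\<in>S. \<forall>y'\<in>S. E x x' \<longrightarrow> E y y' \<longrightarrow> (B e x y \<longleftrightarrow> B e x' y')) \<and>
     \<comment> \<open>reflexivity\<close>
     (\<forall>e>0. \<forall>x\<in>S. B e x x) \<and>
     \<comment> \<open>symmetry\<close>
     (\<forall>e>0. \<forall>x\<in>S. \<forall>y\<in>S. B e x y \<longrightarrow> B e y x) \<and>
     \<comment> \<open>triangle inequality\<close>
     (\<forall>e1>0. \<forall>e2>0. \<forall>x\<in>S. \<forall>y\<in>S. \<forall>z\<in>S. B e1 x y \<longrightarrow> B e2 y z \<longrightarrow> B (e1 + e2) x z) \<and>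
     \<comment> \<open>closedness\<close>
     (\<forall>e>0. \<forall>x\<in>S. \<forall>y\<in>S. (\<forall>d>e. B d x y) \<longrightarrow> B e x y) \<and>
     \<comment> \<open>separation\<close>
     (\<forall>x\<in>S. \<forall>y\<in>S. (\<forall>e>0. B e x y) \<longrightarrow> E x y)"

definition Qball :: "rat \<Rightarrow> rat \<Rightarrow> rat \<Rightarrow> bool" where
  "Qball e x y \<longleftrightarrow> \<bar>x - y\<bar> \<le> e"

definition SInf_carrier :: "'a set \<Rightarrow> 'a stepf set" where
  "SInf_carrier S = {f. wf_stepf S f}"

definition SInf_eq :: "('a \<Rightarrow> 'a \<Rightarrow> bool) \<Rightarrow> 'a stepf \<Rightarrow> 'a stepf \<Rightarrow> bool" where
  "SInf_eq E f g = fold_star (smap E f @@ g)"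

definition SInf_ball :: "(rat \<Rightarrow> 'a \<Rightarrow> 'a \<Rightarrow> bool) \<Rightarrow> rat \<Rightarrow> 'a stepf \<Rightarrow> 'a stepf \<Rightarrow> bool" where
  "SInf_ball B e f g = fold_star (smap (B e) f @@ g)"

text \<open>Completion: regular functions from positive rationals into X
  (values at non-positive arguments are irrelevant).\<close>
definition C_carrier :: "'a set \<Rightarrow> (rat \<Rightarrow> 'a \<Rightarrow> 'a \<Rightarrow> bool) \<Rightarrow> (rat \<Rightarrow> 'a) set" where
  "C_carrier S B = {x. (\<forall>e>0. x e \<in> S) \<and> (\<forall>e1>0. \<forall>e2>0. B (e1 + e2) (x e1) (x e2))}"

definition C_ball :: "(rat \<Rightarrow> 'a \<Rightarrow> 'a \<Rightarrow> bool) \<Rightarrow> rat \<Rightarrow> (rat \<Rightarrow> 'a) \<Rightarrow> (rat \<Rightarrow> 'a) \<Rightarrow> bool" where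
  "C_ball B e x y \<longleftrightarrow> (\<forall>d1>0. \<forall>d2>0. B (d1 + e + d2) (x d1) (y d2))"

definition C_eq :: "(rat \<Rightarrow> 'a \<Rightarrow> 'a \<Rightarrow> bool) \<Rightarrow> (rat \<Rightarrow> 'a) \<Rightarrow> (rat \<Rightarrow> 'a) \<Rightarrow> bool" where
  "C_eq B x y \<longleftrightarrow> (\<forall>e>0. C_ball B e x y)"

definition unif_cont ::
  "'a set \<Rightarrow> (rat \<Rightarrow> 'a \<Rightarrow> 'a \<Rightarrow> bool) \<Rightarrow> 'b set \<Rightarrow> (rat \<Rightarrow> 'b \<Rightarrow> 'b \<Rightarrow> bool) \<Rightarrow> ('a \<Rightarrow> 'b) \<Rightarrow> bool" where
  "unif_cont S1 B1 S2 B2 F \<longleftrightarrow>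
     (\<forall>x\<in>S1. F x \<in> S2) \<and>
     (\<exists>\<mu>. \<forall>e>0. 0 < \<mu> e \<and> (\<forall>x1\<in>S1. \<forall>x2\<in>S1. B1 (\<mu> e) x1 x2 \<longrightarrow> B2 e (F x1) (F x2)))"

definition sdist :: "(rat \<Rightarrow> 'a) stepf \<Rightarrow> rat \<Rightarrow> 'a stepf" where
  "sdist g = (\<lambda>e. smap (\<lambda>x. x e) g)"

end

theory Submission
  imports Defs
begin

lemma smap_comp: "smap \<phi> (smap \<psi> f) = smap (\<phi> \<circ> \<psi>) f"
  by (induct f) auto

lemma SplitL_smap: "SplitL (smap \<psi> g) a = smap \<psi> (SplitL g a)"
  by (induct g arbitrary: a) auto

lemma SplitR_smap: "SplitR (smap \<psi> g) a = smap \<psi> (SplitR g a)"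
  by (induct g arbitrary: a) auto

lemma sap_smap_right: "F @@ smap \<psi> g = smap (\<lambda>h. h \<circ> \<psi>) F @@ g"
  by (induct F arbitrary: g) (auto simp: smap_comp SplitL_smap SplitR_smap)

lemma smap_sap: "smap h (F @@ g) = smap (\<lambda>\<phi>. h \<circ> \<phi>) F @@ g"
  by (induct F arbitrary: g) (auto simp: smap_comp)

lemma pair_form: "smap \<phi> f @@ g = smap (case_prod \<phi>) (smap Pair f @@ g)"
  by (simp add: smap_sap smap_comp comp_def)

lemma diag_aux: "smap \<phi> g @@ g = smap (\<lambda>x. \<phi> x x) g"
  by (induct g) auto

lemma diag: "smap \<phi> g @@ smap \<psi> g = smap (\<lambda>x. \<phi> x (\<psi> x)) g"
  by (simp add: sap_smap_right smap_comp diag_aux comp_def)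

lemma fold_star_smap: "fold_star (smap P X) = (\<forall>x\<in>set_stepf X. P x)"
  by (induct X) (auto simp: fold_star_def)

lemma wf_smap: "wf_stepf T g \<Longrightarrow> (\<And>x. x \<in> T \<Longrightarrow> h x \<in> S) \<Longrightarrow> wf_stepf S (smap h g)"
  by (induct g) auto

lemma wf_set: "wf_stepf T g \<Longrightarrow> x \<in> set_stepf g \<Longrightarrow> x \<in> T"
  by (induct g) auto

lemma part1:
  assumes "g \<in> SInf_carrier (C_carrier S B)"
  shows "sdist g \<in> C_carrier (SInf_carrier S) (SInf_ball B)"
proof -
  have wf: "wf_stepf (C_carrier S B) g" using assms by (simp add: SInf_carrier_def)
  have A: "\<forall>e>0. sdist g e \<in> SInf_carrier S"
    using wf by (auto simp: SInf_carrier_def sdist_def C_carrier_def intro!: wf_smap)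
  have "\<forall>e1>0. \<forall>e2>0. SInf_ball B (e1 + e2) (sdist g e1) (sdist g e2)"
  proof (intro allI impI)
    fix e1 e2 :: rat assume "e1 > 0" "e2 > 0"
    have eq: "smap (B (e1 + e2)) (smap (\<lambda>x. x e1) g) @@ smap (\<lambda>x. x e2) g
        = smap (\<lambda>x. B (e1 + e2) (x e1) (x e2)) g"
      by (simp add: smap_comp diag comp_def)
    have "\<forall>x\<in>set_stepf g. B (e1 + e2) (x e1) (x e2)"
    proof
      fix x assume "x \<in> set_stepf g"
      then have "x \<in> C_carrier S B" using wf_set[OF wf] by blast
      then show "B (e1 + e2) (x e1) (x e2)" using \<open>e1 > 0\<close> \<open>e2 > 0\<close>
        unfolding C_carrier_def by blast
    qed
    then show "SInf_ball B (e1 + e2) (sdist g e1) (sdist g e2)"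
      unfolding SInf_ball_def sdist_def eq fold_star_smap .
  qed
  with A show ?thesis by (simp add: C_carrier_def)
qed

lemma part1':
  assumes "g \<in> SInf_carrier (C_carrier S B)" "e1 > 0" "e2 > 0"
  shows "SInf_ball B (e1 + e2) (sdist g e1) (sdist g e2)"
  using part1[OF assms(1)] assms(2,3) by (simp add: C_carrier_def)

lemma part2_ball:
  assumes "SInf_ball (C_ball B) e g1 g2"
  shows "C_ball (SInf_ball B) e (sdist g1) (sdist g2)"
  unfolding C_ball_def
proof (intro allI impI)
  fix d1 d2 :: rat assume "d1 > 0" "d2 > 0"
  have h: "\<forall>p\<in>set_stepf (smap Pair g1 @@ g2). case_prod (C_ball B e) p"
    using assms by (simp add: SInf_ball_def pair_form[of "C_ball B e"] fold_star_smap)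
  have "smap (B (d1 + e + d2)) (smap (\<lambda>x. x d1) g1) @@ smap (\<lambda>x. x d2) g2
       = smap (\<lambda>(x,y). B (d1 + e + d2) (x d1) (y d2)) (smap Pair g1 @@ g2)"
    apply (simp add: sap_smap_right smap_comp comp_def)
    apply (subst pair_form)
    apply (simp add: case_prod_beta)
    done
  then show "SInf_ball B (d1 + e + d2) (sdist g1 d1) (sdist g2 d2)"
    using h \<open>d1 > 0\<close> \<open>d2 > 0\<close>
    by (auto simp: SInf_ball_def sdist_def fold_star_smap C_ball_def)
qed

lemma part2:
  "unif_cont (SInf_carrier (C_carrier S B)) (SInf_ball (C_ball B))
     (C_carrier (SInf_carrier S) (SInf_ball B)) (C_ball (SInf_ball B)) sdist"
  unfolding unif_cont_def
  using part1 part2_ball by (auto intro!: exI[of _ "\<lambda>e. e"])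

lemma part3:
  fixes f :: "rat \<Rightarrow> rat \<Rightarrow> rat"
  assumes uc: "unif_cont UNIV Qball (C_carrier UNIV Qball) (C_ball Qball) f"
  shows "unif_cont (SInf_carrier UNIV) (SInf_ball Qball)
           (C_carrier (SInf_carrier UNIV) (SInf_ball Qball)) (C_ball (SInf_ball Qball))
           (sdist \<circ> smap f)"
proof -
  from uc have fin: "\<And>x. f x \<in> C_carrier UNIV Qball" by (simp add: unif_cont_def)
  from uc obtain \<mu> where mu: "\<forall>e>0. 0 < \<mu> e \<and> (\<forall>x1 x2. Qball (\<mu> e) x1 x2 \<longrightarrow> C_ball Qball e (f x1) (f x2))"
    by (auto simp: unif_cont_def)
  have wfm: "\<And>g. g \<in> SInf_carrier UNIV \<Longrightarrow> smap f g \<in> SInf_carrier (C_carrier UNIV Qball)"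
    using fin by (auto simp: SInf_carrier_def intro!: wf_smap)
  have ball: "SInf_ball (C_ball Qball) e (smap f g1) (smap f g2)"
    if "e > 0" "SInf_ball Qball (\<mu> e) g1 g2" for e g1 g2
  proof -
    have h: "\<forall>p\<in>set_stepf (smap Pair g1 @@ g2). case_prod (Qball (\<mu> e)) p"
      using that by (simp add: SInf_ball_def pair_form[of "Qball (\<mu> e)"] fold_star_smap)
    have "smap (C_ball Qball e) (smap f g1) @@ smap f g2
       = smap (\<lambda>(x,y). C_ball Qball e (f x) (f y)) (smap Pair g1 @@ g2)"
      apply (simp add: sap_smap_right smap_comp comp_def)
      apply (subst pair_form)
      apply (simp add: case_prod_beta)
      done
    then show ?thesis using h mu \<open>e > 0\<close>
      by (auto simp: SInf_ball_def fold_star_smap)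
  qed
  have m1: "\<forall>x\<in>SInf_carrier UNIV. (sdist \<circ> smap f) x \<in> C_carrier (SInf_carrier UNIV) (SInf_ball Qball)"
    using wfm part1 by (metis comp_apply)
  have m2: "\<forall>e>0. 0 < \<mu> e \<and> (\<forall>x1\<in>SInf_carrier UNIV. \<forall>x2\<in>SInf_carrier UNIV.
      SInf_ball Qball (\<mu> e) x1 x2 \<longrightarrow> C_ball (SInf_ball Qball) e ((sdist \<circ> smap f) x1) ((sdist \<circ> smap f) x2))"
    using mu ball part2_ball by (metis comp_apply)
  show ?thesis unfolding unif_cont_def using m1 m2 by blast
qed

theorem mainTheorem14:
  fixes S :: "'a set" and E :: "'a \<Rightarrow> 'a \<Rightarrow> bool" and B :: "rat \<Rightarrow> 'a \<Rightarrow> 'a \<Rightarrow> bool"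
  assumes "is_metric S E B"
  shows "(\<forall>g\<in>SInf_carrier (C_carrier S B).
            sdist g \<in> C_carrier (SInf_carrier S) (SInf_ball B))
       \<and> unif_cont (SInf_carrier (C_carrier S B)) (SInf_ball (C_ball B))
                   (C_carrier (SInf_carrier S) (SInf_ball B)) (C_ball (SInf_ball B)) sdist
       \<and> (\<forall>f :: rat \<Rightarrow> rat \<Rightarrow> rat.
            unif_cont UNIV Qball (C_carrier UNIV Qball) (C_ball Qball) f \<longrightarrow>
            unif_cont (SInf_carrier UNIV) (SInf_ball Qball)
                      (C_carrier (SInf_carrier UNIV) (SInf_ball Qball)) (C_ball (SInf_ball Qball))
                      (sdist \<circ> smap f))"
  using part1 part2 part3 by blast

end
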